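(* Let $f\in\mathbb{R}[x]$ be squarefree of degree $n$, $f=f_n(x-\xi_1)\cdots(x-\xi_n)$ with pairwise distinct $\xi_i\in\mathbb{C}$, where $\xi_1,\dots,\xi_k$ are the real roots ($0\le k\le n$) and the non-real roots are labeled so that $\xi_{k+2i-1}=\overline{\xi_{k+2i}}$ for $1\le i\le \frac{n-k}{2}$. Let $u_1,\dots,u_n\in\mathbb{C}[x]$ be the Lagrange basis $u_i=\prod_{j\neq i}\frac{x-\xi_j}{\xi_i-\xi_j}$. Let $g\in\mathbb{R}[x]$ satisfy $g(\xi_i)>0$ for $1\le i\le k$. Fix real numbers $\lambda_i>|g(\xi_{k+2i})|$ for $1\le i\le\frac{n-k}{2}$ and set $$h=\sum_{i=1}^n g(\xi_i)\,u_i^2+2\sum_{i=1}^{(n-k)/2}\lambda_i\,u_{k+2i-1}u_{k+2i}.$$ Then $h\in\mathbb{R}[x]$, $h\equiv g\pmod f$, and $h=\sum_{i=1}^n\omega_i h_i^2$, where: - $h_i=u_i$ and $\omega_i=g(\xi_i)$ for $1\le i\le k$; - for $1\le i\le\frac{n-k}{2}$, writing $\gamma_i=g(\xi_{k+2i})$, $$h_{k+2i-1}=\Re(u_{k+2i})-\frac{\Im(\gamma_i)}{\lambda_i+\Re(\gamma_i)}\Im(u_{k+2i}),\qquad h_{k+2i}=\frac{\sqrt{\lambda_i^2-|\gamma_i|^2}}{\lambda_i+\Re(\gamma_i)}\Im(u_{k+2i}),$$ and $\omega_{k+2i-1}=\omega_{k+2i}=2(\lambda_i+\Re(\gamma_i))$.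 Moreover all $\omega_i>0$, and $h_1,\dots,h_n$ are linearly independent polynomials in $\mathbb{R}[x]$ of degree $<n$.
   Context: For a polynomial $u\in\mathbb{C}[x]$, $\Re(u)$ and $\Im(u)$ denote the real polynomials obtained by taking real and imaginary parts of the coefficients, so $u=\Re(u)+\mathbf{i}\,\Im(u)$. *)

theory Defs
  imports "HOL-Computational_Algebra.Computational_Algebra"
begin

definition Re_poly :: "complex poly \<Rightarrow> real poly" where
  "Re_poly u = map_poly Re u"

definition Im_poly :: "complex poly \<Rightarrow> real poly" where
  "Im_poly u = map_poly Im u"

definition lagrange_basis :: "nat \<Rightarrow> (nat \<Rightarrow> complex) \<Rightarrow> nat \<Rightarrow> complex poly" where
  "lagrange_basis n xi i =
     (\<Prod>j\<in>{1..n} - {i}. smult (1 / (xi i - xi j)) [:- xi j, 1:])"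

end

theory Submission
  imports Defs
begin


lemma map_of_real_add: "map_poly (of_real :: real \<Rightarrow> 'a::real_algebra_1) (p + q) = map_poly of_real p + map_poly of_real q"
  by (rule poly_eqI) (simp add: coeff_map_poly)
lemma map_of_real_diff: "map_poly (of_real :: real \<Rightarrow> 'a::real_algebra_1) (p - q) = map_poly of_real p - map_poly of_real q"
  by (rule poly_eqI) (simp add: coeff_map_poly)
lemma map_of_real_mult: "map_poly (of_real :: real \<Rightarrow> 'a::{real_algebra_1,comm_ring_1}) (p * q) = map_poly of_real p * map_poly of_real q"
  by (rule poly_eqI) (simp add: coeff_map_poly coeff_mult)
lemma map_of_real_smult: "map_poly (of_real :: real \<Rightarrow> 'a::{real_algebra_1,comm_ring_1}) (smult c p) = smult (of_real c) (map_poly of_real p)"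
  by (rule map_poly_smult) auto
lemma map_of_real_power: "map_poly (of_real :: real \<Rightarrow> 'a::{real_algebra_1,comm_ring_1}) (p ^ n) = (map_poly of_real p) ^ n"
  by (induction n) (auto simp: map_of_real_mult)
lemma map_of_real_sum: "map_poly (of_real :: real \<Rightarrow> 'a::{real_algebra_1,comm_ring_1}) (sum f A) = (\<Sum>i\<in>A. map_poly of_real (f i))"
  by (induction A rule: infinite_finite_induct) (auto simp: map_of_real_add)
lemma Re_map_of_real: "Re_poly (map_poly complex_of_real p) = p"
  by (simp add: Re_poly_def map_poly_map_poly o_def)
lemma degree_map_of_real: "degree (map_poly complex_of_real p) = degree p"
  by (rule degree_map_poly) auto

lemma dvd_transfer:
  fixes f q :: "real poly"
  assumes "map_poly complex_of_real f dvd map_poly complex_of_real q"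
  shows "f dvd q"
proof (cases "f = 0")
  case True
  then have "map_poly complex_of_real q = 0" using assms by simp
  then have "q = 0" by (metis Re_map_of_real map_poly_0 Re_poly_def)
  then show ?thesis by simp
next
  case False
  define r where "r = q mod f"
  have qe: "q = f * (q div f) + r" unfolding r_def by simp
  have "map_poly complex_of_real q = map_poly complex_of_real f * map_poly complex_of_real (q div f) + map_poly complex_of_real r"
    by (subst qe) (simp add: map_of_real_add map_of_real_mult)
  then have d: "map_poly complex_of_real f dvd map_poly complex_of_real r"
    using assms by (metis dvd_add_right_iff dvd_triv_left)
  have "r = 0"
  proof (rule ccontr)
    assume "r \<noteq> 0"
    then have "degree r < degree f" using degree_mod_less[of f q] False unfolding r_def by auto
    moreover have "map_poly complex_of_real r \<noteq> 0" using \<open>r \<noteq> 0\<close> by (metis Re_map_of_real map_poly_0 Re_poly_def)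
    ultimately show False using dvd_imp_degree_le[OF d] by (simp add: degree_map_of_real)
  qed
  then show ?thesis unfolding r_def by (simp add: mod_eq_0_iff_dvd)
qed

lemma split_sum:
  fixes F :: "nat \<Rightarrow> 'a::comm_monoid_add"
  shows "(\<Sum>i=1..k+2*m. F i) = (\<Sum>i=1..k. F i) + (\<Sum>j=1..m. F (k+2*j-1) + F (k+2*j))"
proof (induction m)
  case 0 then show ?case by simp
next
  case (Suc m)
  have "k + 2 * Suc m = Suc (Suc (k + 2*m))" by simp
  then have "(\<Sum>i=1..k+2*Suc m. F i) = (\<Sum>i=1..k+2*m. F i) + F (k+2*m+1) + F (k+2*m+2)"
    by (simp add: add.assoc)
  also have "\<dots> = (\<Sum>i=1..k. F i) + (\<Sum>j=1..Suc m. F (k+2*j-1) + F (k+2*j))"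
    using Suc by (simp add: add.assoc)
  finally show ?case .
qed

lemma vanish_dvd:
  fixes xi :: "nat \<Rightarrow> 'a::idom"
  assumes "finite A" "inj_on xi A" "\<forall>j\<in>A. poly p (xi j) = 0"
  shows "(\<Prod>j\<in>A. [:- xi j, 1:]) dvd p"
  using assms
proof (induction A arbitrary: p rule: finite_induct)
  case empty then show ?case by simp
next
  case (insert a A)
  have "[:- xi a, 1:] dvd p" using insert.prems by (simp add: dvd_iff_poly_eq_0)
  then obtain q where q: "p = [:- xi a, 1:] * q" by (elim dvdE)
  have "\<forall>j\<in>A. poly q (xi j) = 0"
  proof
    fix j assume j: "j \<in> A"
    then have "xi j \<noteq> xi a" using insert.prems(1) insert.hyps(2) by (metis inj_on_contraD insertCI)
    moreover have "poly p (xi j) = 0" using insert.prems j by auto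
    ultimately show "poly q (xi j) = 0" using q by simp
  qed
  then have "(\<Prod>j\<in>A. [:- xi j, 1:]) dvd q" using insert.IH insert.prems by (auto intro: inj_on_subset)
  then show ?case unfolding prod.insert[OF insert.hyps] q by (rule mult_dvd_mono[OF dvd_refl])
qed

lemma degree_nodes: "degree (\<Prod>j\<in>{1..n}. [:- (xi j::'a::idom), 1:]) = n"
  by (subst degree_prod_eq_sum_degree) auto

lemma vanish_zero:
  fixes xi :: "nat \<Rightarrow> 'a::idom"
  assumes "inj_on xi {1..n}" "degree p < n" "\<forall>j\<in>{1..n}. poly p (xi j) = 0"
  shows "p = 0"
proof (rule ccontr)
  assume "p \<noteq> 0"
  have "(\<Prod>j\<in>{1..n}. [:- xi j, 1:]) dvd p" using vanish_dvd[OF _ assms(1,3)] by simp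
  from dvd_imp_degree_le[OF this \<open>p \<noteq> 0\<close>] assms(2) degree_nodes[where n=n and xi=xi] show False by linarith
qed

lemma interp_eq:
  fixes xi :: "nat \<Rightarrow> 'a::idom"
  assumes "inj_on xi {1..n}" "degree p < n" "degree q < n" "\<forall>j\<in>{1..n}. poly p (xi j) = poly q (xi j)"
  shows "p = q"
proof -
  have "degree (p - q) < n" using assms(2,3) degree_diff_le_max[of p q] by linarith
  moreover have "\<forall>j\<in>{1..n}. poly (p - q) (xi j) = 0" using assms(4) by simp
  ultimately have "p - q = 0" using vanish_zero[OF assms(1)] by blast
  then show ?thesis by simp
qed

lemma lag_poly:
  assumes "inj_on xi {1..n}" "i \<in> {1..n}" "j \<in> {1..n}"
  shows "poly (lagrange_basis n xi i) (xi j) = (if i = j then 1 else 0)"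
proof (cases "i = j")
  case True
  have "\<forall>l\<in>{1..n}-{i}. xi i \<noteq> xi l" using assms by (metis DiffE inj_on_contraD singletonI)
  then have "\<forall>l\<in>{1..n}-{i}. poly (smult (1 / (xi i - xi l)) [:- xi l, 1:]) (xi i) = 1"
  proof (intro ballI)
    fix l assume "l \<in> {1..n}-{i}"
    then have "xi i - xi l \<noteq> 0" using \<open>\<forall>l\<in>{1..n}-{i}. xi i \<noteq> xi l\<close> by auto
    then show "poly (smult (1 / (xi i - xi l)) [:- xi l, 1:]) (xi i) = 1" by (simp flip: diff_divide_distrib)
  qed
  then show ?thesis using True unfolding lagrange_basis_def poly_prod
    by (intro trans[OF prod.neutral]) auto
next
  case False
  then have "j \<in> {1..n} - {i}" using assms by auto
  then show ?thesis using False unfolding lagrange_basis_def poly_prod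
    by (auto intro!: prod_zero)
qed

lemma lag_deg: "i \<in> {1..n} \<Longrightarrow> degree (lagrange_basis n xi i) \<le> n - 1"
proof -
  assume i: "i \<in> {1..n}"
  define F where "F = (\<lambda>j. smult (1 / (xi i - xi j)) [:- xi j, 1:])"
  have "degree (lagrange_basis n xi i) \<le> sum (degree \<circ> F) ({1..n}-{i})"
    unfolding lagrange_basis_def F_def[symmetric] by (rule degree_prod_sum_le) simp
  also have "\<dots> \<le> (\<Sum>j\<in>{1..n}-{i}. 1)" unfolding F_def o_def
    by (intro sum_mono, rule order.trans[OF degree_smult_le]) simp
  also have "\<dots> = n - 1" using i by simp
  finally show ?thesis .
qed

lemma eval_sum:
  assumes "inj_on xi {1..n}" "p \<in> {1..n}"
  shows "poly (\<Sum>i=1..n. smult (d i) (lagrange_basis n xi i)) (xi p) = d p"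
proof -
  have "poly (\<Sum>i=1..n. smult (d i) (lagrange_basis n xi i)) (xi p) = (\<Sum>i=1..n. d i * poly (lagrange_basis n xi i) (xi p))"
    by (simp add: poly_sum)
  also have "\<dots> = (\<Sum>i=1..n. if i = p then d i else 0)"
    by (rule sum.cong) (use assms in \<open>auto simp: lag_poly\<close>)
  also have "\<dots> = d p" using assms(2) by simp
  finally show ?thesis .
qed

lemma cplx_decomp: "u = map_poly complex_of_real (Re_poly u) + smult \<i> (map_poly complex_of_real (Im_poly u))"
  by (rule poly_eqI) (simp add: coeff_map_poly Re_poly_def Im_poly_def complex_eq_iff)
lemma cplx_decomp_cnj: "map_poly cnj u = map_poly complex_of_real (Re_poly u) - smult \<i> (map_poly complex_of_real (Im_poly u))"
  by (rule poly_eqI) (simp add: coeff_map_poly Re_poly_def Im_poly_def complex_eq_iff)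
lemma cplx_real: "map_poly cnj u = u \<Longrightarrow> u = map_poly complex_of_real (Re_poly u)"
proof (rule poly_eqI)
  fix j assume "map_poly cnj u = u"
  then have "coeff (map_poly cnj u) j = coeff u j" by simp
  then have "cnj (coeff u j) = coeff u j" by (simp add: coeff_map_poly)
  then show "coeff u j = coeff (map_poly complex_of_real (Re_poly u)) j"
    by (simp add: coeff_map_poly Re_poly_def complex_eq_iff)
qed

lemma poly_map_of_real: "poly (map_poly complex_of_real p) (complex_of_real x) = complex_of_real (poly p x)"
  by (induction p) (auto simp: map_poly_pCons)

lemma ii_sq: "\<i> * \<i> = (-1::complex)" by simp

lemma pair_id:
  fixes \<alpha> \<beta> \<gamma> :: complex and l w t s :: real
  assumes "w = 2*(l + Re \<gamma>)" "w*t = 2*Im \<gamma>" "w*(t*t+s*s) = 2*(l - Re \<gamma>)"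
  shows "cnj \<gamma>*(\<alpha> - \<i>*\<beta>)^2 + \<gamma>*(\<alpha>+\<i>*\<beta>)^2 + 2*(of_real l*((\<alpha>-\<i>*\<beta>)*(\<alpha>+\<i>*\<beta>)))
       = of_real w*(\<alpha> - of_real t*\<beta>)^2 + of_real w*(of_real s*\<beta>)^2"
proof -
  define R where "R = complex_of_real (Re \<gamma>)"
  define I where "I = complex_of_real (Im \<gamma>)"
  have g: "\<gamma> = R + \<i>*I" unfolding R_def I_def by (simp add: complex_eq_iff)
  have cg: "cnj \<gamma> = R - \<i>*I" unfolding R_def I_def by (simp add: complex_eq_iff)
  have a1: "complex_of_real w = 2*(of_real l + R)" unfolding R_def using assms(1) by simp
  have a2: "complex_of_real w * of_real t = 2*I" unfolding I_def using arg_cong[OF assms(2), of complex_of_real] by simp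
  have a3: "complex_of_real w * (of_real t * of_real t + of_real s * of_real s) = 2*(of_real l - R)"
    unfolding R_def using arg_cong[OF assms(3), of complex_of_real] by simp
  show ?thesis apply (subst cg) apply (subst g) using a1 a2 a3 ii_sq by algebra
qed

lemma lin_id:
  fixes x y :: complex and c1 c2 t s :: real
  shows "of_real c1*(x - of_real t*y) + of_real c2*(of_real s*y)
     = (1/2)*(of_real c1 - \<i>*(of_real c1*of_real t - of_real c2*of_real s))*(x - \<i>*y)
     + (1/2)*(of_real c1 + \<i>*(of_real c1*of_real t - of_real c2*of_real s))*(x + \<i>*y)"
proof -
  have h: "(1/2::complex)*2 = 1" by simp
  show ?thesis using ii_sq h by algebra
qed

lemma smult_sum_right: "smult c (sum f A) = (\<Sum>i\<in>A. smult c (f i))"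
  by (induction A rule: infinite_finite_induct) (auto simp: smult_add_right)

lemma wts_aux:
  fixes l R I :: real assumes "l + R \<noteq> 0"
  shows "2*(l+R)*((I/(l+R))*(I/(l+R)) + (l^2 - R^2 - I^2)/(l+R)^2) = 2*(l - R)"
proof -
  have "(I/(l+R))*(I/(l+R)) + (l^2 - R^2 - I^2)/(l+R)^2 = (I^2 + (l^2 - R^2 - I^2))/(l+R)^2"
    by (simp add: power2_eq_square flip: add_divide_distrib)
  also have "\<dots> = ((l - R)*(l+R))/((l+R)*(l+R))" by (simp add: power2_eq_square algebra_simps)
  also have "\<dots> = (l - R)/(l+R)" using assms by simp
  finally have e: "(I/(l+R))*(I/(l+R)) + (l^2 - R^2 - I^2)/(l+R)^2 = (l - R)/(l+R)" .
  have "(l+R)*((l - R)/(l+R)) = l - R" using assms by simp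
  then have "2*(l+R)*((l - R)/(l+R)) = 2*(l-R)" by (simp only: mult.assoc)
  then show ?thesis unfolding e .
qed



theorem mainTheorem2:
  fixes f g :: "real poly" and n k :: nat and xi :: "nat \<Rightarrow> complex"
    and lam :: "nat \<Rightarrow> real" and h :: "complex poly"
    and hh :: "nat \<Rightarrow> real poly" and w :: "nat \<Rightarrow> real"
  assumes sqf: "squarefree f"
    and deg: "degree f = n"
    and fact: "map_poly complex_of_real f
               = smult (complex_of_real (lead_coeff f)) (\<Prod>i=1..n. [:- xi i, 1:])"
    and dist: "inj_on xi {1..n}"
    and kn: "k \<le> n" and ev: "even (n - k)"
    and real_roots: "\<forall>i\<in>{1..k}. xi i \<in> \<real>"
    and nonreal_roots: "\<forall>i\<in>{k+1..n}. xi i \<notin> \<real>"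
    and pairs: "\<forall>i\<in>{1..(n-k) div 2}. xi (k+2*i-1) = cnj (xi (k+2*i))"
    and gpos: "\<forall>i\<in>{1..k}. poly g (Re (xi i)) > 0"
    and lam: "\<forall>i\<in>{1..(n-k) div 2}.
               lam i > cmod (poly (map_poly complex_of_real g) (xi (k+2*i)))"
    and h_def: "h = (\<Sum>i=1..n. smult (poly (map_poly complex_of_real g) (xi i))
                                      ((lagrange_basis n xi i)\<^sup>2))
                  + smult 2 (\<Sum>i=1..(n-k) div 2. smult (complex_of_real (lam i))
                              (lagrange_basis n xi (k+2*i-1) * lagrange_basis n xi (k+2*i)))"
    and hh_real: "\<forall>i\<in>{1..k}. hh i = Re_poly (lagrange_basis n xi i)
                               \<and> w i = poly g (Re (xi i))"
    and hh_pair: "\<forall>i\<in>{1..(n-k) div 2}.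
       (let \<gamma> = poly (map_poly complex_of_real g) (xi (k+2*i));
            u = lagrange_basis n xi (k+2*i) in
          hh (k+2*i-1) = Re_poly u - smult (Im \<gamma> / (lam i + Re \<gamma>)) (Im_poly u)
        \<and> hh (k+2*i) = smult (sqrt ((lam i)\<^sup>2 - (cmod \<gamma>)\<^sup>2) / (lam i + Re \<gamma>)) (Im_poly u)
        \<and> w (k+2*i-1) = 2 * (lam i + Re \<gamma>)
        \<and> w (k+2*i) = 2 * (lam i + Re \<gamma>))"
  shows "h = map_poly complex_of_real (Re_poly h)
       \<and> f dvd (Re_poly h - g)
       \<and> Re_poly h = (\<Sum>i=1..n. smult (w i) ((hh i)\<^sup>2))
       \<and> (\<forall>i\<in>{1..n}. w i > 0)
       \<and> (\<forall>c :: nat \<Rightarrow> real. (\<Sum>i=1..n. smult (c i) (hh i)) = 0 \<longrightarrow> (\<forall>i\<in>{1..n}. c i = 0))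
       \<and> (\<forall>i\<in>{1..n}. degree (hh i) < n)"
proof -
  define L where "L = lagrange_basis n xi"
  define m where "m = (n - k) div 2"
  have nkm: "n = k + 2*m" using kn ev unfolding m_def by (metis add_diff_inverse_nat dvd_mult_div_cancel not_less le_less_trans less_irrefl)
  define \<sigma> where "\<sigma> = (\<lambda>i::nat. if i \<le> k then i else if odd (i - k) then i + 1 else i - 1)"
  have pair_idx: "\<exists>j\<in>{1..m}. i = k+2*j-1 \<or> i = k+2*j" if "i \<in> {1..n}" "\<not> i \<le> k" for i
    using that nkm by (intro bexI[where x="(i - k + 1) div 2"]) (simp; presburger)+
  have sig_in: "\<sigma> i \<in> {1..n}" if "i \<in> {1..n}" for i
    using that nkm unfolding \<sigma>_def by (auto; presburger)
  have sig_inv: "\<sigma> (\<sigma> i) = i" if "i \<in> {1..n}" for i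
    using that nkm unfolding \<sigma>_def by (auto; presburger)
  have sig_a: "\<sigma> (k+2*j-1) = k+2*j" if "j \<in> {1..m}" for j
    using that unfolding \<sigma>_def by (auto; presburger)
  have sig_b: "\<sigma> (k+2*j) = k+2*j-1" if "j \<in> {1..m}" for j
    using that unfolding \<sigma>_def by (auto; presburger)
  have ab_in: "k+2*j-1 \<in> {1..n}" "k+2*j \<in> {1..n}" if "j \<in> {1..m}" for j
    using that nkm by auto
  have sig_xi: "cnj (xi i) = xi (\<sigma> i)" if i: "i \<in> {1..n}" for i
  proof (cases "i \<le> k")
    case True
    then have "xi i \<in> \<real>" using real_roots i by auto
    then show ?thesis using True by (simp add: \<sigma>_def Reals_cnj_iff)
  next
    case False
    then obtain j where j: "j \<in> {1..m}" "i = k+2*j-1 \<or> i = k+2*j" using pair_idx i by blast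
    have pj: "xi (k+2*j-1) = cnj (xi (k+2*j))" using pairs j(1) unfolding m_def by auto
    from j(2) show ?thesis
    proof
      assume ii: "i = k+2*j-1"
      then show ?thesis using pj sig_a[OF j(1)] by simp
    next
      assume ii: "i = k+2*j"
      then show ?thesis using pj sig_b[OF j(1)] by simp
    qed
  qed
  have Lcnj: "map_poly cnj (L i) = L (\<sigma> i)" if i: "i \<in> {1..n}" for i
  proof -
    have n1: "n \<ge> 1" using i by auto
    show "map_poly cnj (L i) = L (\<sigma> i)"
    proof (rule interp_eq[OF dist])
      show "degree (map_poly cnj (L i)) < n" using lag_deg[OF i, of xi] n1 unfolding L_def
        by (subst degree_map_poly) auto
      show "degree (L (\<sigma> i)) < n" using lag_deg[OF sig_in[OF i], of xi] n1 unfolding L_def by simp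
      show "\<forall>j\<in>{1..n}. poly (map_poly cnj (L i)) (xi j) = poly (L (\<sigma> i)) (xi j)"
      proof
        fix p assume p: "p \<in> {1..n}"
        have "poly (map_poly cnj (L i)) (xi p) = cnj (poly (L i) (xi (\<sigma> p)))" using sig_xi[OF p] by simp
        also have "\<dots> = (if i = \<sigma> p then 1 else 0)" unfolding L_def using lag_poly[OF dist i sig_in[OF p]] by simp
        also have "\<dots> = (if \<sigma> i = p then 1 else 0)" using sig_inv[OF i] sig_inv[OF p] by auto
        also have "\<dots> = poly (L (\<sigma> i)) (xi p)" unfolding L_def using lag_poly[OF dist sig_in[OF i] p] by simp
        finally show "poly (map_poly cnj (L i)) (xi p) = poly (L (\<sigma> i)) (xi p)" .
      qed
    qed
  qed
  have Lreal: "L i = map_poly complex_of_real (Re_poly (L i))" if i: "i \<in> {1..k}" for i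
  proof -
    have "i \<in> {1..n}" "\<sigma> i = i" using i kn unfolding \<sigma>_def by auto
    then show ?thesis using Lcnj cplx_real by metis
  qed
  have Lb: "L (k+2*j) = map_poly complex_of_real (Re_poly (L (k+2*j))) + smult \<i> (map_poly complex_of_real (Im_poly (L (k+2*j))))" for j
    by (rule cplx_decomp)
  have La: "L (k+2*j-1) = map_poly complex_of_real (Re_poly (L (k+2*j))) - smult \<i> (map_poly complex_of_real (Im_poly (L (k+2*j))))" if j: "j \<in> {1..m}" for j
    using Lcnj[OF ab_in(2)[OF j]] sig_b[OF j] cplx_decomp_cnj by metis
  define G where "G i = poly (map_poly complex_of_real g) (xi i)" for i
  have Gcnj: "G (k+2*j-1) = cnj (G (k+2*j))" if j: "j \<in> {1..m}" for j
  proof -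
    have "map_poly cnj (map_poly complex_of_real g) = map_poly complex_of_real g"
      by (simp add: map_poly_map_poly o_def)
    then show ?thesis unfolding G_def using sig_xi[OF ab_in(2)[OF j]] sig_b[OF j] poly_cnj[of "map_poly complex_of_real g" "xi (k+2*j)"]
      by simp
  qed
  have Greal: "G i = complex_of_real (poly g (Re (xi i)))" if i: "i \<in> {1..k}" for i
  proof -
    have "xi i \<in> \<real>" using real_roots i by auto
    then have "xi i = complex_of_real (Re (xi i))" by (simp add: complex_is_Real_iff complex_eq_iff)
    then show ?thesis unfolding G_def by (metis poly_map_of_real)
  qed
  define R where "R j = Re (G (k+2*j))" for j
  define I where "I j = Im (G (k+2*j))" for j
  define \<omega> where "\<omega> j = 2 * (lam j + R j)" for j
  define t where "t j = I j / (lam j + R j)" for j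
  define s where "s j = sqrt ((lam j)\<^sup>2 - (cmod (G (k+2*j)))\<^sup>2) / (lam j + R j)" for j
  have hhp: "hh (k+2*j-1) = Re_poly (L (k+2*j)) - smult (t j) (Im_poly (L (k+2*j)))
      \<and> hh (k+2*j) = smult (s j) (Im_poly (L (k+2*j)))
      \<and> w (k+2*j-1) = \<omega> j \<and> w (k+2*j) = \<omega> j" if j: "j \<in> {1..m}" for j
    using hh_pair j unfolding m_def Let_def L_def G_def t_def s_def \<omega>_def R_def I_def by auto
  have lamgt: "lam j > cmod (G (k+2*j))" if j: "j \<in> {1..m}" for j
    using lam j unfolding m_def G_def by auto
  have lampos: "lam j + R j > 0" if j: "j \<in> {1..m}" for j
    using lamgt[OF j] abs_Re_le_cmod[of "G (k+2*j)"] unfolding R_def by linarith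
  have spos: "s j > 0" if j: "j \<in> {1..m}" for j
  proof -
    have "(cmod (G (k+2*j)))\<^sup>2 < (lam j)\<^sup>2" using lamgt[OF j] by (simp add: power_strict_mono)
    then show ?thesis unfolding s_def using lampos[OF j] by simp
  qed
  have wt: "\<omega> j * t j = 2 * I j" if j: "j \<in> {1..m}" for j
    using lampos[OF j] unfolding \<omega>_def t_def by (simp add: field_simps)
  have wts: "\<omega> j * (t j * t j + s j * s j) = 2 * (lam j - R j)" if j: "j \<in> {1..m}" for j
  proof -
    have c2: "(cmod (G (k+2*j)))\<^sup>2 = (R j)\<^sup>2 + (I j)\<^sup>2" unfolding R_def I_def by (rule cmod_power2)
    have le: "(cmod (G (k+2*j)))\<^sup>2 \<le> (lam j)\<^sup>2" using lamgt[OF j] by (simp add: power_mono)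
    have ss: "s j * s j = ((lam j)\<^sup>2 - (R j)\<^sup>2 - (I j)\<^sup>2) / (lam j + R j)^2"
      unfolding s_def using le c2 by (simp add: power2_eq_square)
    have pos: "lam j + R j \<noteq> 0" using lampos[OF j] by simp
    show ?thesis unfolding ss \<omega>_def t_def by (rule wts_aux[OF pos])
  qed
  define H where "H = (\<Sum>i=1..n. smult (w i) ((hh i)^2))"
  have real_term: "smult (G i) ((L i)^2) = map_poly complex_of_real (smult (w i) ((hh i)^2))" if i: "i \<in> {1..k}" for i
  proof -
    have hw: "hh i = Re_poly (L i)" "w i = poly g (Re (xi i))" using hh_real i unfolding L_def by auto
    have hm: "map_poly complex_of_real (hh i) = L i" using Lreal[OF i] hw(1) by simp
    have Gw: "G i = complex_of_real (w i)" using Greal[OF i] hw(2) by simp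
    show ?thesis by (simp add: map_of_real_smult map_of_real_power hm Gw)
  qed
  have pair_term: "smult (G (k+2*j-1)) ((L (k+2*j-1))^2) + smult (G (k+2*j)) ((L (k+2*j))^2)
        + smult 2 (smult (complex_of_real (lam j)) (L (k+2*j-1) * L (k+2*j)))
      = map_poly complex_of_real (smult (w (k+2*j-1)) ((hh (k+2*j-1))^2) + smult (w (k+2*j)) ((hh (k+2*j))^2))"
    if j: "j \<in> {1..m}" for j
  proof -
    define A where "A = map_poly complex_of_real (Re_poly (L (k+2*j)))"
    define B where "B = map_poly complex_of_real (Im_poly (L (k+2*j)))"
    define \<gamma> where "\<gamma> = G (k+2*j)"
    have e1: "L (k+2*j) = A + smult \<i> B" using Lb unfolding A_def B_def by simp
    have e2: "L (k+2*j-1) = A - smult \<i> B" using La[OF j] unfolding A_def B_def by simp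
    have e3: "map_poly complex_of_real (smult (w (k+2*j-1)) ((hh (k+2*j-1))^2) + smult (w (k+2*j)) ((hh (k+2*j))^2))
       = smult (of_real (\<omega> j)) ((A - smult (of_real (t j)) B)^2) + smult (of_real (\<omega> j)) ((smult (of_real (s j)) B)^2)"
      using hhp[OF j] unfolding A_def B_def
      by (simp add: map_of_real_add map_of_real_diff map_of_real_smult map_of_real_power)
    have e4: "G (k+2*j-1) = cnj \<gamma>" using Gcnj[OF j] unfolding \<gamma>_def .
    have a1: "\<omega> j = 2*(lam j + Re \<gamma>)" unfolding \<omega>_def R_def \<gamma>_def ..
    have a2: "\<omega> j * t j = 2*Im \<gamma>" using wt[OF j] unfolding I_def \<gamma>_def .
    have a3: "\<omega> j * (t j * t j + s j * s j) = 2*(lam j - Re \<gamma>)" using wts[OF j] unfolding R_def \<gamma>_def .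
    show ?thesis unfolding e1 e2 e3 e4 \<gamma>_def[symmetric]
    proof (rule poly_eq_poly_eq_iff[THEN iffD1], rule ext)
      fix x
      let ?a = "poly A x" and ?b = "poly B x"
      have "poly (smult (cnj \<gamma>) ((A - smult \<i> B)\<^sup>2) + smult \<gamma> ((A + smult \<i> B)\<^sup>2) +
          smult 2 (smult (complex_of_real (lam j)) ((A - smult \<i> B) * (A + smult \<i> B)))) x
        = cnj \<gamma>*(?a - \<i>*?b)^2 + \<gamma>*(?a+\<i>*?b)^2 + 2*(of_real (lam j)*((?a-\<i>*?b)*(?a+\<i>*?b)))"
        by simp
      also have "\<dots> = of_real (\<omega> j)*(?a - of_real (t j)*?b)^2 + of_real (\<omega> j)*(of_real (s j)*?b)^2"
        by (rule pair_id[OF a1 a2 a3])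
      also have "\<dots> = poly (smult (complex_of_real (\<omega> j)) ((A - smult (complex_of_real (t j)) B)\<^sup>2) +
          smult (complex_of_real (\<omega> j)) ((smult (complex_of_real (s j)) B)\<^sup>2)) x"
        by simp
      finally show "poly (smult (cnj \<gamma>) ((A - smult \<i> B)\<^sup>2) + smult \<gamma> ((A + smult \<i> B)\<^sup>2) +
          smult 2 (smult (complex_of_real (lam j)) ((A - smult \<i> B) * (A + smult \<i> B)))) x
        = poly (smult (complex_of_real (\<omega> j)) ((A - smult (complex_of_real (t j)) B)\<^sup>2) +
          smult (complex_of_real (\<omega> j)) ((smult (complex_of_real (s j)) B)\<^sup>2)) x" .
    qed
  qed
  have h2: "h = (\<Sum>i=1..n. smult (G i) ((L i)^2))
     + smult 2 (\<Sum>j=1..m. smult (complex_of_real (lam j)) (L (k+2*j-1) * L (k+2*j)))"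
    using h_def unfolding L_def G_def m_def by simp
  have sp1: "(\<Sum>i=1..n. smult (G i) ((L i)^2)) = (\<Sum>i=1..k. smult (G i) ((L i)^2))
     + (\<Sum>j=1..m. smult (G (k+2*j-1)) ((L (k+2*j-1))^2) + smult (G (k+2*j)) ((L (k+2*j))^2))"
    using split_sum[of "\<lambda>i. smult (G i) ((L i)^2)" k m] nkm by simp
  have h3: "h = (\<Sum>i=1..k. smult (G i) ((L i)^2))
     + (\<Sum>j=1..m. smult (G (k+2*j-1)) ((L (k+2*j-1))^2) + smult (G (k+2*j)) ((L (k+2*j))^2)
        + smult 2 (smult (complex_of_real (lam j)) (L (k+2*j-1) * L (k+2*j))))"
    unfolding h2 sp1 smult_sum_right sum.distrib by (simp add: add.assoc)
  have r1: "(\<Sum>i=1..k. smult (G i) ((L i)^2)) = map_poly complex_of_real (\<Sum>i=1..k. smult (w i) ((hh i)^2))"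
    unfolding map_of_real_sum by (rule sum.cong) (simp_all add: real_term)
  have r2: "(\<Sum>j=1..m. smult (G (k+2*j-1)) ((L (k+2*j-1))^2) + smult (G (k+2*j)) ((L (k+2*j))^2)
        + smult 2 (smult (complex_of_real (lam j)) (L (k+2*j-1) * L (k+2*j))))
     = map_poly complex_of_real (\<Sum>j=1..m. smult (w (k+2*j-1)) ((hh (k+2*j-1))^2) + smult (w (k+2*j)) ((hh (k+2*j))^2))"
    unfolding map_of_real_sum by (rule sum.cong[OF refl], rule pair_term) simp
  have r3: "H = (\<Sum>i=1..k. smult (w i) ((hh i)^2))
     + (\<Sum>j=1..m. smult (w (k+2*j-1)) ((hh (k+2*j-1))^2) + smult (w (k+2*j)) ((hh (k+2*j))^2))"
    unfolding H_def using split_sum[of "\<lambda>i. smult (w i) ((hh i)^2)" k m] nkm by simp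
  have hH: "h = map_poly complex_of_real H"
    unfolding h3 r1 r2 r3 map_of_real_add ..
  have ReH: "Re_poly h = H" using hH Re_map_of_real by simp
  have hval: "poly h (xi p) = G p" if p: "p \<in> {1..n}" for p
  proof -
    have v1: "poly (\<Sum>i=1..n. smult (G i) ((L i)^2)) (xi p) = G p"
    proof -
      have "poly (\<Sum>i=1..n. smult (G i) ((L i)^2)) (xi p) = (\<Sum>i=1..n. G i * (poly (L i) (xi p))^2)"
        by (simp add: poly_sum)
      also have "\<dots> = (\<Sum>i=1..n. if i = p then G i else 0)"
        by (rule sum.cong) (use p dist in \<open>auto simp: L_def lag_poly\<close>)
      also have "\<dots> = G p" using p by simp
      finally show ?thesis .
    qed
    have v2: "poly (\<Sum>j=1..m. smult (complex_of_real (lam j)) (L (k+2*j-1) * L (k+2*j))) (xi p) = 0"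
    proof -
      have "poly (\<Sum>j=1..m. smult (complex_of_real (lam j)) (L (k+2*j-1) * L (k+2*j))) (xi p)
         = (\<Sum>j=1..m. complex_of_real (lam j) * (poly (L (k+2*j-1)) (xi p) * poly (L (k+2*j)) (xi p)))"
        by (simp add: poly_sum)
      also have "\<dots> = 0"
      proof (rule sum.neutral, intro ballI)
        fix j assume j: "j \<in> {1..m}"
        show "complex_of_real (lam j) * (poly (L (k+2*j-1)) (xi p) * poly (L (k+2*j)) (xi p)) = 0"
          using lag_poly[OF dist ab_in(1)[OF j] p] lag_poly[OF dist ab_in(2)[OF j] p] j unfolding L_def by auto
      qed
      finally show ?thesis .
    qed
    show ?thesis unfolding h2 poly_add poly_smult v1 v2 by simp
  qed
  have dvd: "f dvd (Re_poly h - g)"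
  proof -
    have fne: "f \<noteq> 0" using sqf by auto
    have "\<forall>p\<in>{1..n}. poly (h - map_poly complex_of_real g) (xi p) = 0" using hval unfolding G_def by simp
    then have P: "(\<Prod>j\<in>{1..n}. [:- xi j, 1:]) dvd (h - map_poly complex_of_real g)"
      by (rule vanish_dvd[OF finite_atLeastAtMost dist])
    have lc: "lead_coeff f \<noteq> 0" using fne by simp
    have "map_poly complex_of_real f dvd h - map_poly complex_of_real g"
      using P lc unfolding fact by (simp add: smult_dvd_iff)
    then show ?thesis using hH by (intro dvd_transfer) (simp add: Re_map_of_real map_of_real_diff)
  qed
  have wpos: "\<forall>i\<in>{1..n}. w i > 0"
  proof
    fix i assume i: "i \<in> {1..n}"
    show "w i > 0"
    proof (cases "i \<le> k")
      case True then show ?thesis using hh_real gpos i by auto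
    next
      case False
      then obtain j where j: "j \<in> {1..m}" "i = k+2*j-1 \<or> i = k+2*j" using pair_idx i by blast
      then show ?thesis using hhp[OF j(1)] lampos[OF j(1)] unfolding \<omega>_def by auto
    qed
  qed
  have degRe: "degree (Re_poly u) \<le> degree u" "degree (Im_poly u) \<le> degree u" for u
    by (simp_all add: Re_poly_def Im_poly_def map_poly_degree_leq)
  have Ldeg: "degree (L i) < n" if i: "i \<in> {1..n}" for i
    using lag_deg[OF i, of xi] i unfolding L_def by auto
  have degs: "\<forall>i\<in>{1..n}. degree (hh i) < n"
  proof
    fix i assume i: "i \<in> {1..n}"
    show "degree (hh i) < n"
    proof (cases "i \<le> k")
      case True
      then have "hh i = Re_poly (L i)" using hh_real i unfolding L_def by auto
      then show ?thesis using degRe(1)[of "L i"] Ldeg[OF i] by simp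
    next
      case False
      then obtain j where j: "j \<in> {1..m}" "i = k+2*j-1 \<or> i = k+2*j" using pair_idx i by blast
      have d1: "degree (Re_poly (L (k+2*j))) < n" using degRe(1) Ldeg[OF ab_in(2)[OF j(1)]] le_less_trans by blast
      have d2: "degree (Im_poly (L (k+2*j))) < n" using degRe(2) Ldeg[OF ab_in(2)[OF j(1)]] le_less_trans by blast
      have d3: "degree (smult c (Im_poly (L (k+2*j)))) < n" for c using d2 degree_smult_le le_less_trans by blast
      have d4: "degree (Re_poly (L (k+2*j)) - smult (t j) (Im_poly (L (k+2*j)))) < n"
        using d1 d3[of "t j"] degree_diff_le_max[of "Re_poly (L (k+2*j))" "smult (t j) (Im_poly (L (k+2*j)))"] by linarith
      from j(2) show ?thesis using hhp[OF j(1)] d3 d4 by auto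
    qed
  qed
  have indep: "\<forall>c :: nat \<Rightarrow> real. (\<Sum>i=1..n. smult (c i) (hh i)) = 0 \<longrightarrow> (\<forall>i\<in>{1..n}. c i = 0)"
  proof (intro allI impI)
    fix c :: "nat \<Rightarrow> real" assume c0: "(\<Sum>i=1..n. smult (c i) (hh i)) = 0"
    define \<alpha> where "\<alpha> j = (1/2)*(complex_of_real (c (k+2*j-1)) + \<i>*(complex_of_real (c (k+2*j-1))*complex_of_real (t j) - complex_of_real (c (k+2*j))*complex_of_real (s j)))" for j
    define \<beta> where "\<beta> j = (1/2)*(complex_of_real (c (k+2*j-1)) - \<i>*(complex_of_real (c (k+2*j-1))*complex_of_real (t j) - complex_of_real (c (k+2*j))*complex_of_real (s j)))" for j
    define d where "d i = (if i \<le> k then complex_of_real (c i) else if odd (i - k) then \<beta> ((i-k+1) div 2) else \<alpha> ((i-k) div 2))" for i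
    have dk: "d i = complex_of_real (c i)" if "i \<le> k" for i using that unfolding d_def by simp
    have da: "d (k+2*j-1) = \<beta> j" if "j \<in> {1..m}" for j
    proof -
      have "\<not> k+2*j-1 \<le> k" "odd (k+2*j-1-k)" "(k+2*j-1-k+1) div 2 = j" using that by (auto; presburger)+
      then show ?thesis unfolding d_def by simp
    qed
    have db: "d (k+2*j) = \<alpha> j" if "j \<in> {1..m}" for j
    proof -
      have "\<not> k+2*j \<le> k" "\<not> odd (k+2*j-k)" "(k+2*j-k) div 2 = j" using that by auto
      then show ?thesis unfolding d_def by simp
    qed
    have rk: "smult (complex_of_real (c i)) (map_poly complex_of_real (hh i)) = smult (d i) (L i)" if i: "i \<in> {1..k}" for i
    proof -
      have "hh i = Re_poly (L i)" using hh_real i unfolding L_def by auto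
      then have "map_poly complex_of_real (hh i) = L i" using Lreal[OF i] by simp
      then show ?thesis using dk i by simp
    qed
    have rp: "smult (complex_of_real (c (k+2*j-1))) (map_poly complex_of_real (hh (k+2*j-1)))
        + smult (complex_of_real (c (k+2*j))) (map_poly complex_of_real (hh (k+2*j)))
      = smult (d (k+2*j-1)) (L (k+2*j-1)) + smult (d (k+2*j)) (L (k+2*j))" if j: "j \<in> {1..m}" for j
    proof -
      define A where "A = map_poly complex_of_real (Re_poly (L (k+2*j)))"
      define B where "B = map_poly complex_of_real (Im_poly (L (k+2*j)))"
      have e1: "L (k+2*j) = A + smult \<i> B" using Lb unfolding A_def B_def by simp
      have e2: "L (k+2*j-1) = A - smult \<i> B" using La[OF j] unfolding A_def B_def by simp
      have e3: "map_poly complex_of_real (hh (k+2*j-1)) = A - smult (of_real (t j)) B"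
        "map_poly complex_of_real (hh (k+2*j)) = smult (of_real (s j)) B"
        using hhp[OF j] unfolding A_def B_def by (simp_all add: map_of_real_diff map_of_real_smult)
      show ?thesis unfolding e1 e2 e3 da[OF j] db[OF j]
      proof (rule poly_eq_poly_eq_iff[THEN iffD1], rule ext)
        fix x
        let ?a = "poly A x" and ?b = "poly B x"
        have "poly (smult (complex_of_real (c (k+2*j-1))) (A - smult (complex_of_real (t j)) B) +
            smult (complex_of_real (c (k+2*j))) (smult (complex_of_real (s j)) B)) x
          = of_real (c (k+2*j-1))*(?a - of_real (t j)*?b) + of_real (c (k+2*j))*(of_real (s j)*?b)"
          by simp
        also have "\<dots> = \<beta> j * (?a - \<i>*?b) + \<alpha> j * (?a + \<i>*?b)"
          unfolding \<alpha>_def \<beta>_def by (rule lin_id)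
        also have "\<dots> = poly (smult (\<beta> j) (A - smult \<i> B) + smult (\<alpha> j) (A + smult \<i> B)) x"
          by simp
        finally show "poly (smult (complex_of_real (c (k+2*j-1))) (A - smult (complex_of_real (t j)) B) +
            smult (complex_of_real (c (k+2*j))) (smult (complex_of_real (s j)) B)) x
          = poly (smult (\<beta> j) (A - smult \<i> B) + smult (\<alpha> j) (A + smult \<i> B)) x" .
      qed
    qed
    have "(\<Sum>i=1..n. smult (d i) (L i)) = map_poly complex_of_real (\<Sum>i=1..n. smult (c i) (hh i))"
    proof -
      have "map_poly complex_of_real (\<Sum>i=1..n. smult (c i) (hh i))
          = (\<Sum>i=1..n. smult (complex_of_real (c i)) (map_poly complex_of_real (hh i)))"
        by (simp add: map_of_real_sum map_of_real_smult)
      also have "\<dots> = (\<Sum>i=1..k. smult (complex_of_real (c i)) (map_poly complex_of_real (hh i)))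
          + (\<Sum>j=1..m. smult (complex_of_real (c (k+2*j-1))) (map_poly complex_of_real (hh (k+2*j-1)))
        + smult (complex_of_real (c (k+2*j))) (map_poly complex_of_real (hh (k+2*j))))"
        using split_sum[of "\<lambda>i. smult (complex_of_real (c i)) (map_poly complex_of_real (hh i))" k m] nkm by simp
      also have "\<dots> = (\<Sum>i=1..k. smult (d i) (L i)) + (\<Sum>j=1..m. smult (d (k+2*j-1)) (L (k+2*j-1)) + smult (d (k+2*j)) (L (k+2*j)))"
        by (rule arg_cong2[where f="(+)"]; rule sum.cong[OF refl]) (simp add: rk, rule rp, simp)
      also have "\<dots> = (\<Sum>i=1..n. smult (d i) (L i))"
        using split_sum[of "\<lambda>i. smult (d i) (L i)" k m] nkm by simp
      finally show ?thesis by simp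
    qed
    then have sumd0: "(\<Sum>i=1..n. smult (d i) (L i)) = 0" using c0 by simp
    have dp: "d p = 0" if p: "p \<in> {1..n}" for p
      using eval_sum[OF dist p, of d] sumd0 unfolding L_def by simp
    show "\<forall>i\<in>{1..n}. c i = 0"
    proof
      fix i assume i: "i \<in> {1..n}"
      show "c i = 0"
      proof (cases "i \<le> k")
        case True then show ?thesis using dp[OF i] dk by simp
      next
        case False
        then obtain j where j: "j \<in> {1..m}" "i = k+2*j-1 \<or> i = k+2*j" using pair_idx i by blast
        have "\<alpha> j = 0" using dp[OF ab_in(2)[OF j(1)]] db[OF j(1)] by simp
        then have "Re (\<alpha> j) = 0" "Im (\<alpha> j) = 0" by simp_all
        then have c1: "c (k+2*j-1) = 0" and "c (k+2*j-1) * t j - c (k+2*j) * s j = 0"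
          unfolding \<alpha>_def by simp_all
        then have "c (k+2*j) * s j = 0" by simp
        then have c2: "c (k+2*j) = 0" using spos[OF j(1)] by simp
        from j(2) c1 c2 show ?thesis by auto
      qed
    qed
  qed
  show ?thesis using ReH hH dvd wpos indep degs unfolding H_def by auto
qed


end
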